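(* Let $Q_{n,m}$ be as defined in the context. Every coloring of $Q_{n,m}$ has cardinality at least $\operatorname{slog}(n,m+1)$.
   Context: A quantum graph $G$ consists of a finite-dimensional complex inner product space $V(G)$ and a real vector space $E(G)$ of self-adjoint operators on $V(G)$ containing the identity $I$; write $|G|=\dim V(G)$ and $\|G\|=\dim E(G)-1$. A code of $G$ is a subspace $C\subseteq V(G)$ such that there is a function $\epsilon_C:E(G)\to\mathbb{R}$ with $P_CAP_C=\epsilon_C(A)P_C$ for all $A\in E(G)$, where $P_C$ is the orthogonal projection onto $C$. A coloring of $G$ is a set $K$ of codes of $G$ with $\sum_{C\in K}P_C=I$. The step logarithm is defined for positive integers $q$ and nonnegative integers $p$ by $\operatorname{slog}(0,q)=0$ and $\operatorname{slog}(p,q)=\operatorname{slog}(p-\lceil p/q\rceil,q)+1$ for $p\ge1$. Let $n\ge 2$ and $1\le m\le n-1$ be integers. $Q_{n,m}$ denotes any quantum graph with $|Q_{n,m}|=n$, $\|Q_{n,m}\|=m$, such that: (i) $E(Q_{n,m})$ is commutative; (ii) (tropical) $E(Q_{n,m})$ has a basis $\{I,A_1,\dots,A_m\}$ and there is an orthonormal basis of $V(Q_{n,m})$ of common eigenvectors of the $A_i$ such that, writing the eigenvalues of $A_i$ in decreasing order $\lambda_{i,1},\dots,\lambda_{i,n}$ with corresponding common eigenvectors $w_{i,1},\dots,w_{i,n}$, one has $0<\lambda_{i,j+1}<\lambda_{i,j}/n^2$ for all $i$ and $1\le j<n$; (iii) (cyclical) for $1\le i<m$ and all $j$, $w_{i+1,j}=w_{i,j+s_i}$,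 with the second index taken modulo $n$ in $\{1,\dots,n\}$, where $s_i=\lfloor n/m\rfloor+1$ if $1\le i\le (n\bmod m)$ and $s_i=\lfloor n/m\rfloor$ otherwise; (iv) the common eigenvectors are enumerated as $w_1,\dots,w_n$ (each common eigenvector exactly once) so that for every $l\in\{1,\dots,n\}$ one has $w_l=w_{i,\lceil l/m\rceil}$ for some $i\in\{1,\dots,m\}$. *)

theory Defs
  imports "Jordan_Normal_Form.Schur_Decomposition"
begin

text \<open>V(G) is modelled as carrier_vec n (complex column vectors of length n) with the
standard inner product v \<bullet>c w; operators are n x n complex matrices.\<close>

definition csubspace_vec :: "nat \<Rightarrow> complex vec set \<Rightarrow> bool" where
  "csubspace_vec n C \<longleftrightarrow> C \<subseteq> carrier_vec n \<and> 0\<^sub>v n \<in> C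
     \<and> (\<forall>x\<in>C. \<forall>y\<in>C. x + y \<in> C) \<and> (\<forall>a::complex. \<forall>x\<in>C. a \<cdot>\<^sub>v x \<in> C)"

definition orth_proj :: "nat \<Rightarrow> complex vec set \<Rightarrow> complex mat" where
  "orth_proj n C = (THE P. P \<in> carrier_mat n n \<and> P * P = P \<and> mat_adjoint P = P
       \<and> (\<lambda>v. P *\<^sub>v v) ` carrier_vec n = C)"

definition is_code :: "nat \<Rightarrow> complex mat set \<Rightarrow> complex vec set \<Rightarrow> bool" where
  "is_code n E C \<longleftrightarrow> csubspace_vec n C \<and>
     (\<exists>\<epsilon>::complex mat \<Rightarrow> real. \<forall>A\<in>E.
        orth_proj n C * A * orth_proj n C = complex_of_real (\<epsilon> A) \<cdot>\<^sub>m orth_proj n C)"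

definition is_coloring :: "nat \<Rightarrow> complex mat set \<Rightarrow> complex vec set set \<Rightarrow> bool" where
  "is_coloring n E K \<longleftrightarrow> finite K \<and> (\<forall>C\<in>K. is_code n E C) \<and>
     mat n n (\<lambda>(p, q). \<Sum>C\<in>K. orth_proj n C $$ (p, q)) = 1\<^sub>m n"

definition lincomb :: "nat \<Rightarrow> nat \<Rightarrow> (nat \<Rightarrow> complex mat) \<Rightarrow> (nat \<Rightarrow> real) \<Rightarrow> complex mat" where
  "lincomb n m A c = mat n n (\<lambda>(p, q). complex_of_real (c 0) * (1\<^sub>m n) $$ (p, q)
       + (\<Sum>i=1..m. complex_of_real (c i) * A i $$ (p, q)))"

definition shift :: "nat \<Rightarrow> nat \<Rightarrow> nat \<Rightarrow> nat" where
  "shift n m i = (if 1 \<le> i \<and> i \<le> n mod m then n div m + 1 else n div m)"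

text \<open>Step logarithm slog(p,q), for q \<ge> 1 (the value for q = 0 is an irrelevant default).\<close>
function slog :: "nat \<Rightarrow> nat \<Rightarrow> nat" where
  "slog p q = (if p = 0 \<or> q = 0 then 0
               else slog (p - nat \<lceil>real p / real q\<rceil>) q + 1)"
  by auto
termination
proof (relation "measure fst")
  fix p q :: nat
  assume h: "\<not> (p = 0 \<or> q = 0)"
  hence "real p / real q > 0" by simp
  hence "nat \<lceil>real p / real q\<rceil> \<ge> 1" by linarith
  with h show "((p - nat \<lceil>real p / real q\<rceil>, q), p, q) \<in> measure fst" by simp
qed simp

end

theory Submission
  imports Defs
begin

lemma hom_sys:
  fixes a :: "nat \<Rightarrow> nat \<Rightarrow> 'a::field"
  shows "finite S \<Longrightarrow> card S < d \<Longrightarrow> \<exists>c. (\<exists>k<d. c k \<noteq> 0) \<and> (\<forall>s\<in>S. (\<Sum>k<d. a s k * c k) = 0)"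
proof (induction d arbitrary: S a)
  case 0 then show ?case by simp
next
  case (Suc d)
  show ?case
  proof (cases "\<forall>s\<in>S. a s d = 0")
    case True
    let ?c = "\<lambda>k. if k = d then (1::'a) else 0"
    have "\<forall>s\<in>S. (\<Sum>k<Suc d. a s k * ?c k) = 0"
      using True by (simp add: sum.distrib)
    then show ?thesis by (intro exI[of _ ?c]) auto
  next
    case False
    then obtain s0 where s0: "s0 \<in> S" "a s0 d \<noteq> 0" by auto
    let ?S = "S - {s0}"
    let ?b = "\<lambda>s k. a s k - a s d / a s0 d * a s0 k"
    have "card ?S < d" using Suc.prems s0 card_gt_0_iff[of S] by (auto simp add: card_Diff_singleton)
    then obtain c' where c': "\<exists>k<d. c' k \<noteq> 0" "\<forall>s\<in>?S. (\<Sum>k<d. ?b s k * c' k) = 0"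
      using Suc.IH[of ?S ?b] Suc.prems by auto
    define T where "T = (\<Sum>k<d. a s0 k * c' k)"
    define c where "c = (\<lambda>k. if k < d then c' k else - T / a s0 d)"
    have "\<forall>s\<in>S. (\<Sum>k<Suc d. a s k * c k) = 0"
    proof
      fix s assume s: "s \<in> S"
      have e1: "(\<Sum>k<Suc d. a s k * c k) = (\<Sum>k<d. a s k * c' k) - a s d * T / a s0 d"
        by (simp add: c_def)
      show "(\<Sum>k<Suc d. a s k * c k) = 0"
      proof (cases "s = s0")
        case True
        then show ?thesis using e1 s0 T_def by simp
      next
        case False
        hence "(\<Sum>k<d. ?b s k * c' k) = 0" using c' s by auto
        hence "(\<Sum>k<d. a s k * c' k) - a s d / a s0 d * T = 0"
          unfolding T_def by (simp add: algebra_simps sum_subtractf sum_distrib_left)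
        then show ?thesis using e1 by simp
      qed
    qed
    moreover have "\<exists>k<Suc d. c k \<noteq> 0" using c' by (auto simp: c_def)
    ultimately show ?thesis by blast
  qed
qed

definition ip :: "nat \<Rightarrow> complex vec \<Rightarrow> complex vec \<Rightarrow> complex" where
  "ip n x y = (\<Sum>p<n. x$p * cnj (y$p))"

definition lc :: "nat \<Rightarrow> complex vec list \<Rightarrow> (nat \<Rightarrow> complex) \<Rightarrow> complex vec" where
  "lc n bs c = vec n (\<lambda>p. \<Sum>k<length bs. c k * bs!k $ p)"

definition ON :: "nat \<Rightarrow> complex vec list \<Rightarrow> bool" where
  "ON n bs \<longleftrightarrow> set bs \<subseteq> carrier_vec n \<and>
     (\<forall>k<length bs. \<forall>k'<length bs. ip n (bs!k) (bs!k') = (if k = k' then 1 else 0))"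

definition pm :: "nat \<Rightarrow> complex vec list \<Rightarrow> complex mat" where
  "pm n bs = mat n n (\<lambda>(p,q). \<Sum>k<length bs. bs!k $ p * cnj (bs!k $ q))"

lemma cscalar_ip:
  assumes "x \<in> carrier_vec n" "y \<in> carrier_vec n"
  shows "x \<bullet>c y = ip n x y"
  using assms unfolding ip_def scalar_prod_def by (auto intro: sum.cong simp: lessThan_atLeast0)

lemma mv:
  assumes "A \<in> carrier_mat n n" "x \<in> carrier_vec n" "p < n"
  shows "(A *\<^sub>v x) $ p = (\<Sum>q<n. A $$ (p,q) * x $ q)"
  using assms by (auto simp: scalar_prod_def lessThan_atLeast0 intro!: sum.cong)

lemma lc_carrier[simp]: "lc n bs c \<in> carrier_vec n"
  unfolding lc_def by simp

lemma lc_dim[simp]: "dim_vec (lc n bs c) = n"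
  unfolding lc_def by simp

lemma lc_index[simp]: "p < n \<Longrightarrow> lc n bs c $ p = (\<Sum>k<length bs. c k * bs!k $ p)"
  unfolding lc_def by simp

lemma ip_conj: "ip n y x = cnj (ip n x y)"
  unfolding ip_def by (simp add: mult.commute)

lemma ip_lc_left: "ip n (lc n bs c) y = (\<Sum>k<length bs. c k * ip n (bs!k) y)"
  unfolding ip_def by (simp add: sum_distrib_left sum_distrib_right mult.assoc sum.swap[of _ "{..<n}"])

lemma ip_lc_right: "ip n y (lc n bs c) = (\<Sum>k<length bs. cnj (c k) * ip n y (bs!k))"
  by (subst ip_conj, simp add: ip_lc_left ip_conj[of n y])

lemma ip_add_left: "x \<in> carrier_vec n \<Longrightarrow> y \<in> carrier_vec n \<Longrightarrow> ip n (x + y) z = ip n x z + ip n y z"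
  unfolding ip_def by (simp add: sum.distrib algebra_simps)

lemma ip_minus_left: "x \<in> carrier_vec n \<Longrightarrow> y \<in> carrier_vec n \<Longrightarrow> ip n (x - y) z = ip n x z - ip n y z"
  unfolding ip_def by (simp add: sum_subtractf algebra_simps)

lemma ip_smult_left: "x \<in> carrier_vec n \<Longrightarrow> ip n (a \<cdot>\<^sub>v x) z = a * ip n x z"
  unfolding ip_def by (simp add: sum_distrib_left algebra_simps)

lemma ip_smult_right: "x \<in> carrier_vec n \<Longrightarrow> ip n z (a \<cdot>\<^sub>v x) = cnj a * ip n z x"
  unfolding ip_def by (simp add: sum_distrib_left algebra_simps)

lemma ip_self: "ip n x x = of_real (\<Sum>p<n. (cmod (x$p))^2)"
  unfolding ip_def of_real_sum by (intro sum.cong refl) (simp add: complex_norm_square[symmetric])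

lemma ip_self_real: "ip n x x = of_real (Re (ip n x x))"
  unfolding ip_self by simp

lemma ip_self_ge0: "Re (ip n x x) \<ge> 0"
  unfolding ip_self by (simp add: sum_nonneg)

lemma ip_self_zero:
  assumes "x \<in> carrier_vec n" "ip n x x = 0" shows "x = 0\<^sub>v n"
proof -
  have "(\<Sum>p<n. (cmod (x$p))^2) = 0" using assms(2) unfolding ip_self of_real_eq_0_iff by simp
  hence "\<forall>p\<in>{..<n}. (cmod (x$p))^2 = 0" by (subst (asm) sum_nonneg_eq_0_iff) auto
  thus ?thesis using assms(1) by (intro eq_vecI) auto
qed

lemma ON_ip: assumes "ON n bs" "j < length bs" shows "ip n (lc n bs c) (bs!j) = c j"
proof -
  have "ip n (lc n bs c) (bs!j) = (\<Sum>k<length bs. if k = j then c k else 0)"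
    unfolding ip_lc_left using assms unfolding ON_def by (intro sum.cong) auto
  also have "\<dots> = c j" using assms(2) by (simp add: sum.delta)
  finally show ?thesis .
qed

lemma ON_carrier: "ON n bs \<Longrightarrow> k < length bs \<Longrightarrow> bs!k \<in> carrier_vec n"
  unfolding ON_def by auto

lemma ON_extend:
  assumes on: "ON n bs" and z: "z \<in> carrier_vec n" and nz: "z \<noteq> 0\<^sub>v n"
    and orth: "\<forall>k<length bs. ip n z (bs!k) = 0"
  shows "ON n (bs @ [complex_of_real (1 / sqrt (Re (ip n z z))) \<cdot>\<^sub>v z])"
proof -
  define r where "r = Re (ip n z z)"
  define a where "a = complex_of_real (1 / sqrt r)"
  have r0: "r > 0" using ip_self_ge0[of n z] ip_self_zero[OF z] nz ip_self_real[of n z]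
    unfolding r_def by (metis less_eq_real_def of_real_0)
  have zz: "ip n z z = of_real r" using ip_self_real unfolding r_def by simp
  have aa: "a * cnj a * ip n z z = 1"
    unfolding zz a_def using r0 by (simp flip: of_real_mult add: real_sqrt_mult[symmetric])
  let ?b = "a \<cdot>\<^sub>v z"
  have bb: "ip n ?b ?b = 1" using aa z by (simp add: ip_smult_left ip_smult_right mult.assoc mult.commute mult.left_commute)
  have bk: "ip n ?b (bs!k) = 0" "ip n (bs!k) ?b = 0" if "k < length bs" for k
    using orth that z by (simp_all add: ip_smult_left ip_smult_right, subst ip_conj, simp)
  show ?thesis unfolding ON_def
  proof (intro conjI allI impI)
    show "set (bs @ [complex_of_real (1 / sqrt (Re (ip n z z))) \<cdot>\<^sub>v z]) \<subseteq> carrier_vec n"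
      using on z unfolding ON_def by auto
  next
    fix k k' assume k: "k < length (bs @ [complex_of_real (1 / sqrt (Re (ip n z z))) \<cdot>\<^sub>v z])"
      and k': "k' < length (bs @ [complex_of_real (1 / sqrt (Re (ip n z z))) \<cdot>\<^sub>v z])"
    have e: "complex_of_real (1 / sqrt (Re (ip n z z))) = a" unfolding a_def r_def ..
    show "ip n ((bs @ [complex_of_real (1 / sqrt (Re (ip n z z))) \<cdot>\<^sub>v z]) ! k)
            ((bs @ [complex_of_real (1 / sqrt (Re (ip n z z))) \<cdot>\<^sub>v z]) ! k') = (if k = k' then 1 else 0)"
      unfolding e using k k' on bb bk unfolding ON_def
      by (cases "k < length bs"; cases "k' < length bs") (auto simp: nth_append)
  qed
qed

lemma ON_length:
  assumes on: "ON n bs" shows "length bs \<le> n"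
proof (rule ccontr)
  assume "\<not> length bs \<le> n"
  hence "card {..<n} < length bs" by simp
  from hom_sys[OF _ this, of "\<lambda>s k. bs!k $ s"] obtain c where
    c: "\<exists>k<length bs. c k \<noteq> 0" "\<forall>s\<in>{..<n}. (\<Sum>k<length bs. bs!k $ s * c k) = 0" by auto
  have "lc n bs c = 0\<^sub>v n"
    using c(2) by (intro eq_vecI) (auto simp: mult.commute)
  hence "ip n (lc n bs c) (bs!k) = 0" for k unfolding ip_def by simp
  with ON_ip[OF on] c(1) show False by metis
qed

lemma lc_in_subspace:
  assumes C: "csubspace_vec n C" and bs: "set bs \<subseteq> C"
  shows "lc n bs c \<in> C"
proof -
  have "d \<le> length bs \<Longrightarrow> vec n (\<lambda>p. \<Sum>k<d. c k * bs!k $ p) \<in> C" for d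
  proof (induction d)
    case 0
    have "vec n (\<lambda>p. \<Sum>k<0. c k * bs!k $ p) = 0\<^sub>v n" by auto
    then show ?case using C unfolding csubspace_vec_def by simp
  next
    case (Suc d)
    have bd: "bs!d \<in> C" using Suc.prems bs by auto
    hence bdc: "bs!d \<in> carrier_vec n" using C unfolding csubspace_vec_def by auto
    have "vec n (\<lambda>p. \<Sum>k<Suc d. c k * bs!k $ p) = vec n (\<lambda>p. \<Sum>k<d. c k * bs!k $ p) + c d \<cdot>\<^sub>v bs!d"
      using bdc by (intro eq_vecI) auto
    moreover have "c d \<cdot>\<^sub>v bs!d \<in> C" using C bd unfolding csubspace_vec_def by auto
    ultimately show ?case using Suc C unfolding csubspace_vec_def by auto
  qed
  from this[of "length bs"] show ?thesis unfolding lc_def by simp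
qed

lemma ip_residual:
  assumes on: "ON n bs" and x: "x \<in> carrier_vec n" and j: "j < length bs"
  shows "ip n (x - lc n bs (\<lambda>k. ip n x (bs!k))) (bs!j) = 0"
  using ON_ip[OF on j] x by (simp add: ip_minus_left)

lemma ONB_exists:
  assumes C: "csubspace_vec n C"
  shows "\<exists>bs. ON n bs \<and> set bs \<subseteq> C \<and> (\<forall>x\<in>C. lc n bs (\<lambda>k. ip n x (bs!k)) = x)"
proof -
  define Q where "Q = (\<lambda>l. \<exists>bs. ON n bs \<and> set bs \<subseteq> C \<and> length bs = l)"
  have Q0: "Q 0" unfolding Q_def ON_def by auto
  have Qb: "\<forall>y. Q y \<longrightarrow> y \<le> n" unfolding Q_def using ON_length by auto
  have "Q (GREATEST l. Q l)" by (rule GreatestI_nat[of Q 0 n, OF Q0]) (use Qb in auto)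
  then obtain bs where bs: "ON n bs" "set bs \<subseteq> C" and len: "length bs = (GREATEST l. Q l)"
    unfolding Q_def by auto
  have max: "Q l \<Longrightarrow> l \<le> length bs" for l unfolding len by (rule Greatest_le_nat[of Q l n]) (use Qb in auto)
  have Cc: "C \<subseteq> carrier_vec n" using C unfolding csubspace_vec_def by auto
  have "lc n bs (\<lambda>k. ip n x (bs!k)) = x" if xC: "x \<in> C" for x
  proof -
    let ?l = "lc n bs (\<lambda>k. ip n x (bs!k))"
    define z where "z = x - ?l"
    have x: "x \<in> carrier_vec n" using xC Cc by auto
    have zc: "z \<in> carrier_vec n" unfolding z_def using x by simp
    have "z = x + (-1) \<cdot>\<^sub>v ?l" unfolding z_def using x by (intro eq_vecI) auto
    moreover have "?l \<in> C" by (rule lc_in_subspace[OF C bs(2)])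
    ultimately have zC: "z \<in> C" using C xC unfolding csubspace_vec_def by auto
    have z0: "z = 0\<^sub>v n"
    proof (rule ccontr)
      assume nz: "z \<noteq> 0\<^sub>v n"
      have orth: "\<forall>k<length bs. ip n z (bs!k) = 0" unfolding z_def using ip_residual[OF bs(1) x] by auto
      let ?b = "complex_of_real (1 / sqrt (Re (ip n z z))) \<cdot>\<^sub>v z"
      have "ON n (bs @ [?b])" by (rule ON_extend[OF bs(1) zc nz orth])
      moreover have "?b \<in> C" using C zC unfolding csubspace_vec_def by auto
      ultimately have "Q (length bs + 1)" unfolding Q_def using bs(2) by (intro exI[of _ "bs @ [?b]"]) auto
      with max show False by fastforce
    qed
    show ?thesis
    proof (rule eq_vecI)
      fix p assume "p < dim_vec x"
      hence p: "p < n" using x by simp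
      have "z $ p = 0" using z0 p by simp
      thus "?l $ p = x $ p" unfolding z_def using p x by simp
    qed (use x in simp)
  qed
  with bs show ?thesis by blast
qed


lemma pm_carrier[simp]: "pm n bs \<in> carrier_mat n n"
  unfolding pm_def by simp

lemma pm_mult_carrier[simp]: "x \<in> carrier_vec n \<Longrightarrow> pm n bs *\<^sub>v x \<in> carrier_vec n"
  by (rule mult_mat_vec_carrier[OF pm_carrier])

lemma pm_dims[simp]: "dim_row (pm n bs) = n" "dim_col (pm n bs) = n"
  unfolding pm_def by simp_all

lemma pm_mult:
  assumes x: "x \<in> carrier_vec n"
  shows "pm n bs *\<^sub>v x = lc n bs (\<lambda>k. ip n x (bs!k))"
proof (rule eq_vecI)
  fix p assume "p < dim_vec (lc n bs (\<lambda>k. ip n x (bs!k)))"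
  hence p: "p < n" by simp
  have "(pm n bs *\<^sub>v x) $ p = (\<Sum>q<n. (\<Sum>k<length bs. bs!k $ p * cnj (bs!k $ q)) * x $ q)"
    using mv[OF pm_carrier x p] p unfolding pm_def by simp
  also have "\<dots> = (\<Sum>q<n. \<Sum>k<length bs. bs!k $ p * cnj (bs!k $ q) * x $ q)"
    by (simp add: sum_distrib_right)
  also have "\<dots> = (\<Sum>k<length bs. \<Sum>q<n. bs!k $ p * cnj (bs!k $ q) * x $ q)"
    by (rule sum.swap)
  also have "\<dots> = (\<Sum>k<length bs. ip n x (bs!k) * bs!k $ p)"
    unfolding ip_def by (intro sum.cong refl) (simp add: sum_distrib_left sum_distrib_right mult_ac)
  finally show "(pm n bs *\<^sub>v x) $ p = lc n bs (\<lambda>k. ip n x (bs!k)) $ p" using p by simp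
qed (use x in simp)


lemma mat_eq_action:
  fixes A B :: "complex mat"
  assumes A: "A \<in> carrier_mat n n" and B: "B \<in> carrier_mat n n"
    and eq: "\<And>x. x \<in> carrier_vec n \<Longrightarrow> A *\<^sub>v x = B *\<^sub>v x"
  shows "A = B"
proof (rule eq_matI)
  fix i j assume i: "i < dim_row B" and j: "j < dim_col B"
  hence i': "i < n" and j': "j < n" using B by auto
  have u: "unit_vec n j \<in> carrier_vec n" by simp
  have "\<And>M::complex mat. M \<in> carrier_mat n n \<Longrightarrow> (M *\<^sub>v unit_vec n j) $ i = M $$ (i,j)"
  proof -
    fix M :: "complex mat" assume M: "M \<in> carrier_mat n n"
    have "(M *\<^sub>v unit_vec n j) $ i = (\<Sum>q<n. M $$ (i,q) * unit_vec n j $ q)"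
      by (rule mv[OF M u i'])
    also have "\<dots> = (\<Sum>q<n. if q = j then M $$ (i,q) else 0)"
      by (intro sum.cong refl) (auto simp: unit_vec_def)
    also have "\<dots> = M $$ (i,j)" using j' by simp
    finally show "(M *\<^sub>v unit_vec n j) $ i = M $$ (i,j)" .
  qed
  with eq[OF u] A B show "A $$ (i,j) = B $$ (i,j)" by metis
qed (use A B in auto)


lemma mat_adjoint_index:
  assumes A: "A \<in> carrier_mat n n" and i: "i < n" and j: "j < n"
  shows "mat_adjoint A $$ (i,j) = cnj (A $$ (j,i))"
  using A i j unfolding mat_adjoint_def mat_of_rows_def by auto

lemma mat_adjoint_carrier:
  assumes A: "A \<in> carrier_mat n n" shows "mat_adjoint A \<in> carrier_mat n n"
  using A unfolding mat_adjoint_def mat_of_rows_def by auto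


lemma selfadj_ip:
  assumes A: "A \<in> carrier_mat n n" and sa: "mat_adjoint A = A"
    and x: "x \<in> carrier_vec n" and y: "y \<in> carrier_vec n"
  shows "ip n (A *\<^sub>v x) y = ip n x (A *\<^sub>v y)"
proof -
  have e: "A $$ (p,q) = cnj (A $$ (q,p))" if "p < n" "q < n" for p q
    using mat_adjoint_index[OF A that] sa by simp
  have "ip n (A *\<^sub>v x) y = (\<Sum>p<n. (\<Sum>q<n. A $$ (p,q) * x $ q) * cnj (y $ p))"
    unfolding ip_def using mv[OF A x] by simp
  also have "\<dots> = (\<Sum>p<n. (\<Sum>q<n. cnj (A $$ (q,p)) * x $ q) * cnj (y $ p))"
  proof (intro sum.cong refl arg_cong2[where f="(*)"])
    fix p q assume "p \<in> {..<n}" "q \<in> {..<n}"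
    thus "A $$ (p,q) = cnj (A $$ (q,p))" using e by blast
  qed
  also have "\<dots> = (\<Sum>p<n. \<Sum>q<n. cnj (A $$ (q,p)) * x $ q * cnj (y $ p))"
    by (simp add: sum_distrib_right)
  also have "\<dots> = (\<Sum>q<n. \<Sum>p<n. cnj (A $$ (q,p)) * x $ q * cnj (y $ p))"
    by (rule sum.swap)
  also have "\<dots> = (\<Sum>q<n. x $ q * cnj (\<Sum>p<n. A $$ (q,p) * y $ p))"
    by (intro sum.cong refl) (simp add: sum_distrib_left mult_ac)
  also have "\<dots> = ip n x (A *\<^sub>v y)"
    unfolding ip_def using mv[OF A y] by simp
  finally show ?thesis .
qed


lemma pm_adjoint: "mat_adjoint (pm n bs) = pm n bs"
proof (rule eq_matI)
  fix i j assume "i < dim_row (pm n bs)" "j < dim_col (pm n bs)"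
  hence ij: "i < n" "j < n" by (auto simp: pm_def)
  show "mat_adjoint (pm n bs) $$ (i, j) = pm n bs $$ (i, j)"
    unfolding mat_adjoint_index[OF pm_carrier ij] using ij by (simp add: pm_def mult.commute)
qed (use mat_adjoint_carrier[OF pm_carrier, of n bs] in auto)

definition ONB :: "nat \<Rightarrow> complex vec set \<Rightarrow> complex vec list \<Rightarrow> bool" where
  "ONB n C bs \<longleftrightarrow> ON n bs \<and> set bs \<subseteq> C \<and> (\<forall>x\<in>C. lc n bs (\<lambda>k. ip n x (bs!k)) = x)"

lemma pm_fix:
  assumes "ONB n C bs" "x \<in> C" "C \<subseteq> carrier_vec n"
  shows "pm n bs *\<^sub>v x = x"
  using assms pm_mult unfolding ONB_def by auto

lemma pm_in:
  assumes C: "csubspace_vec n C" "ONB n C bs" "x \<in> carrier_vec n"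
  shows "pm n bs *\<^sub>v x \<in> C"
  using assms pm_mult lc_in_subspace unfolding ONB_def by auto




lemma orth_proj_pm:
  assumes C: "csubspace_vec n C" and B: "ONB n C bs"
  shows "orth_proj n C = pm n bs"
  unfolding orth_proj_def
proof (rule the_equality)
  have Cc: "C \<subseteq> carrier_vec n" using C unfolding csubspace_vec_def by auto
  show "pm n bs \<in> carrier_mat n n \<and> pm n bs * pm n bs = pm n bs \<and> mat_adjoint (pm n bs) = pm n bs \<and>
    (\<lambda>v. pm n bs *\<^sub>v v) ` carrier_vec n = C"
  proof (intro conjI)
    show "pm n bs * pm n bs = pm n bs"
    proof (rule mat_eq_action[of _ n])
      fix x :: "complex vec" assume x: "x \<in> carrier_vec n"
      have "(pm n bs * pm n bs) *\<^sub>v x = pm n bs *\<^sub>v (pm n bs *\<^sub>v x)"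
        using x by (simp add: assoc_mult_mat_vec[of _ n n _ n])
      also have "\<dots> = pm n bs *\<^sub>v x" using pm_fix[OF B pm_in[OF C B x] Cc] .
      finally show "(pm n bs * pm n bs) *\<^sub>v x = pm n bs *\<^sub>v x" .
    qed auto
    show "(\<lambda>v. pm n bs *\<^sub>v v) ` carrier_vec n = C"
    proof
      show "(\<lambda>v. pm n bs *\<^sub>v v) ` carrier_vec n \<subseteq> C" using pm_in[OF C B] by auto
      show "C \<subseteq> (\<lambda>v. pm n bs *\<^sub>v v) ` carrier_vec n"
      proof
        fix x assume "x \<in> C"
        thus "x \<in> (\<lambda>v. pm n bs *\<^sub>v v) ` carrier_vec n"
          using pm_fix[OF B _ Cc] Cc by (intro image_eqI[of _ _ x]) auto
      qed
    qed
  qed (simp_all add: pm_adjoint)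
next
  fix Q assume Q: "Q \<in> carrier_mat n n \<and> Q * Q = Q \<and> mat_adjoint Q = Q \<and> (\<lambda>v. Q *\<^sub>v v) ` carrier_vec n = C"
  have Cc: "C \<subseteq> carrier_vec n" using C unfolding csubspace_vec_def by auto
  have QC: "Q *\<^sub>v x \<in> C" if "x \<in> carrier_vec n" for x using Q that by auto
  have Qfix: "Q *\<^sub>v y = y" if "y \<in> C" for y
  proof -
    obtain x where x: "x \<in> carrier_vec n" "y = Q *\<^sub>v x" using Q \<open>y \<in> C\<close> by auto
    have "(Q * Q) *\<^sub>v x = Q *\<^sub>v (Q *\<^sub>v x)" using x Q by (intro assoc_mult_mat_vec) auto
    thus ?thesis using Q x by simp
  qed
  show "Q = pm n bs"
  proof (rule mat_eq_action[of _ n])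
    fix x :: "complex vec" assume x: "x \<in> carrier_vec n"
    let ?z = "Q *\<^sub>v x - pm n bs *\<^sub>v x"
    have Qc: "Q \<in> carrier_mat n n" using Q by auto
    have zc: "?z \<in> carrier_vec n" using x Qc pm_carrier[of n bs] by (intro minus_carrier_vec mult_mat_vec_carrier) auto
    have "ip n (Q *\<^sub>v x) y = ip n (pm n bs *\<^sub>v x) y" if y: "y \<in> carrier_vec n" for y
    proof -
      have "ip n (Q *\<^sub>v x) y = ip n (pm n bs *\<^sub>v (Q *\<^sub>v x)) y"
        using pm_fix[OF B QC[OF x] Cc] by simp
      also have "\<dots> = ip n (Q *\<^sub>v x) (pm n bs *\<^sub>v y)"
        by (rule selfadj_ip[OF pm_carrier pm_adjoint]) (use x Qc y in auto)
      also have "\<dots> = ip n x (Q *\<^sub>v (pm n bs *\<^sub>v y))"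
        by (rule selfadj_ip) (use x Qc y Q in auto)
      also have "\<dots> = ip n x (pm n bs *\<^sub>v y)"
        using Qfix[OF pm_in[OF C B y]] by simp
      also have "\<dots> = ip n (pm n bs *\<^sub>v x) y"
        by (rule selfadj_ip[OF pm_carrier pm_adjoint, symmetric]) (use x y in auto)
      finally show ?thesis .
    qed
    from this[OF zc] have "ip n ?z ?z = 0" using x Qc zc
      by (simp add: ip_minus_left)
    from ip_self_zero[OF zc this] have "?z = 0\<^sub>v n" .
    have "(Q *\<^sub>v x) $ p = (pm n bs *\<^sub>v x) $ p" if p: "p < n" for p
    proof -
      have "?z $ p = 0" using \<open>?z = 0\<^sub>v n\<close> p by simp
      thus ?thesis using p Qc by simp
    qed
    thus "Q *\<^sub>v x = pm n bs *\<^sub>v x"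
      using x Qc by (intro eq_vecI) auto
  qed (use Q in auto)
qed


lemma ON_complete:
  assumes on: "ON n us" and len: "length us = n" and x: "x \<in> carrier_vec n"
  shows "lc n us (\<lambda>k. ip n x (us!k)) = x"
proof -
  let ?l = "lc n us (\<lambda>k. ip n x (us!k))"
  define z where "z = x - ?l"
  have zc: "z \<in> carrier_vec n" unfolding z_def using x by simp
  have z0: "z = 0\<^sub>v n"
  proof (rule ccontr)
    assume nz: "z \<noteq> 0\<^sub>v n"
    have orth: "\<forall>k<length us. ip n z (us!k) = 0" unfolding z_def using ip_residual[OF on x] by auto
    from ON_length[OF ON_extend[OF on zc nz orth]] len show False by simp
  qed
  show ?thesis
  proof (rule eq_vecI)
    fix p assume "p < dim_vec x"
    hence p: "p < n" using x by simp
    have "z $ p = 0" using z0 p by simp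
    thus "?l $ p = x $ p" unfolding z_def using p x by simp
  qed (use x in simp)
qed

lemma parseval_list:
  assumes on: "ON n us" and len: "length us = n" and x: "x \<in> carrier_vec n" and y: "y \<in> carrier_vec n"
  shows "ip n y x = (\<Sum>k<n. ip n y (us!k) * ip n (us!k) x)"
proof -
  have "ip n y x = ip n (lc n us (\<lambda>k. ip n y (us!k))) x" using ON_complete[OF on len y] by simp
  also have "\<dots> = (\<Sum>k<n. ip n y (us!k) * ip n (us!k) x)" unfolding ip_lc_left len ..
  finally show ?thesis .
qed

lemma norm_form:
  assumes PAR: "\<forall>x\<in>carrier_vec n. \<forall>y\<in>carrier_vec n. ip n y x = (\<Sum>j\<in>J. ip n y (w j) * ip n (w j) x)"
    and x: "x \<in> carrier_vec n"
  shows "ip n x x = of_real (\<Sum>j\<in>J. (cmod (ip n x (w j)))^2)"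
proof -
  have "ip n x x = (\<Sum>j\<in>J. ip n x (w j) * ip n (w j) x)" using PAR x by auto
  also have "\<dots> = (\<Sum>j\<in>J. of_real ((cmod (ip n x (w j)))^2))"
    by (intro sum.cong refl) (subst ip_conj[of n "w _"], simp add: complex_norm_square[symmetric])
  finally show ?thesis by simp
qed

lemma quad_form:
  assumes A: "A \<in> carrier_mat n n" and sa: "mat_adjoint A = A"
    and W: "\<forall>j\<in>J. w j \<in> carrier_vec n"
    and EIG: "\<forall>j\<in>J. A *\<^sub>v w j = complex_of_real (lam j) \<cdot>\<^sub>v w j"
    and PAR: "\<forall>x\<in>carrier_vec n. \<forall>y\<in>carrier_vec n. ip n y x = (\<Sum>j\<in>J. ip n y (w j) * ip n (w j) x)"
    and x: "x \<in> carrier_vec n"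
  shows "ip n (A *\<^sub>v x) x = of_real (\<Sum>j\<in>J. lam j * (cmod (ip n x (w j)))^2)"
proof -
  have Ax: "A *\<^sub>v x \<in> carrier_vec n" using A x by simp
  have "ip n (A *\<^sub>v x) x = (\<Sum>j\<in>J. ip n (A *\<^sub>v x) (w j) * ip n (w j) x)" using PAR x Ax by auto
  also have "\<dots> = (\<Sum>j\<in>J. of_real (lam j * (cmod (ip n x (w j)))^2))"
  proof (intro sum.cong refl)
    fix j assume j: "j \<in> J"
    have "ip n (A *\<^sub>v x) (w j) = ip n x (A *\<^sub>v w j)" by (rule selfadj_ip[OF A sa x]) (use W j in auto)
    also have "\<dots> = of_real (lam j) * ip n x (w j)" using EIG W j by (simp add: ip_smult_right)
    finally have e: "ip n (A *\<^sub>v x) (w j) = of_real (lam j) * ip n x (w j)" .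
    show "ip n (A *\<^sub>v x) (w j) * ip n (w j) x = of_real (lam j * (cmod (ip n x (w j)))^2)"
      unfolding e by (subst ip_conj[of n "w j"], simp add: complex_norm_square[symmetric] mult.assoc)
  qed
  finally show ?thesis by simp
qed

lemma smult_mat_vec:
  assumes "P \<in> carrier_mat n n" "v \<in> carrier_vec n"
  shows "(a \<cdot>\<^sub>m P) *\<^sub>v v = a \<cdot>\<^sub>v (P *\<^sub>v v)"
  using assms by (intro eq_vecI) (auto simp: scalar_prod_def sum_distrib_left mult.assoc)

lemma pm_quad:
  assumes y: "y \<in> carrier_vec n"
  shows "ip n (pm n bs *\<^sub>v y) y = of_real (\<Sum>k<length bs. (cmod (ip n y (bs!k)))^2)"
proof -
  have "ip n (pm n bs *\<^sub>v y) y = (\<Sum>k<length bs. ip n y (bs!k) * ip n (bs!k) y)"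
    unfolding pm_mult[OF y] ip_lc_left ..
  also have "\<dots> = (\<Sum>k<length bs. of_real ((cmod (ip n y (bs!k)))^2))"
    by (intro sum.cong refl) (subst ip_conj[of n "bs!_"], simp add: complex_norm_square[symmetric])
  finally show ?thesis by simp
qed

lemma code_quad:
  assumes C: "csubspace_vec n C" and B: "ONB n C bs" and A: "A \<in> carrier_mat n n"
    and code: "pm n bs * A * pm n bs = complex_of_real eps \<cdot>\<^sub>m pm n bs"
    and v: "v \<in> C"
  shows "ip n (A *\<^sub>v v) v = of_real eps * ip n v v"
proof -
  let ?P = "pm n bs"
  have Cc: "C \<subseteq> carrier_vec n" using C unfolding csubspace_vec_def by auto
  have vc: "v \<in> carrier_vec n" using v Cc by auto
  have Pv: "?P *\<^sub>v v = v" by (rule pm_fix[OF B v Cc])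
  have "(?P * A * ?P) *\<^sub>v v = (?P * A) *\<^sub>v (?P *\<^sub>v v)"
    using A vc by (intro assoc_mult_mat_vec) auto
  also have "\<dots> = ?P *\<^sub>v (A *\<^sub>v v)" unfolding Pv using A vc by (intro assoc_mult_mat_vec) auto
  finally have "?P *\<^sub>v (A *\<^sub>v v) = of_real eps \<cdot>\<^sub>v v"
    unfolding code using smult_mat_vec[OF pm_carrier vc] Pv by simp
  have Av: "A *\<^sub>v v \<in> carrier_vec n" using A vc by simp
  have "ip n (A *\<^sub>v v) v = ip n (A *\<^sub>v v) (?P *\<^sub>v v)" unfolding Pv ..
  also have "\<dots> = ip n (?P *\<^sub>v (A *\<^sub>v v)) v"
    by (rule selfadj_ip[OF pm_carrier pm_adjoint Av vc, symmetric])
  also have "\<dots> = of_real eps * ip n v v"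
    unfolding \<open>?P *\<^sub>v (A *\<^sub>v v) = of_real eps \<cdot>\<^sub>v v\<close> using vc by (simp add: ip_smult_left)
  finally show ?thesis .
qed

lemma code_eps_bound:
  assumes C: "csubspace_vec n C" and B: "ONB n C bs" and A: "A \<in> carrier_mat n n"
    and sa: "mat_adjoint A = A"
    and code: "pm n bs * A * pm n bs = complex_of_real eps \<cdot>\<^sub>m pm n bs"
    and W: "\<forall>j\<in>{1..n}. w j \<in> carrier_vec n"
    and EIG: "\<forall>j\<in>{1..n}. A *\<^sub>v w j = complex_of_real (lam j) \<cdot>\<^sub>v w j"
    and PAR: "\<forall>x\<in>carrier_vec n. \<forall>y\<in>carrier_vec n. ip n y x = (\<Sum>j\<in>{1..n}. ip n y (w j) * ip n (w j) x)"
    and mono: "\<forall>j. r < j \<and> j \<le> n \<longrightarrow> lam j \<le> lam (Suc r)"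
    and big: "r < length bs"
  shows "eps \<le> lam (Suc r)"
proof -
  have Cc: "C \<subseteq> carrier_vec n" using C unfolding csubspace_vec_def by auto
  have on: "ON n bs" and bsC: "set bs \<subseteq> C" using B unfolding ONB_def by auto
  have "card {1..r} < length bs" using big by simp
  from hom_sys[OF _ this, of "\<lambda>s k. ip n (bs!k) (w s)"] obtain c where
    c: "\<exists>k<length bs. c k \<noteq> 0" "\<forall>s\<in>{1..r}. (\<Sum>k<length bs. ip n (bs!k) (w s) * c k) = 0" by auto
  define v where "v = lc n bs c"
  have vC: "v \<in> C" unfolding v_def by (rule lc_in_subspace[OF C bsC])
  have vc: "v \<in> carrier_vec n" unfolding v_def by simp
  have orth: "ip n v (w s) = 0" if "s \<in> {1..r}" for s
    unfolding v_def ip_lc_left using c(2) that by (simp add: mult.commute)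
  obtain k0 where k0: "k0 < length bs" "c k0 \<noteq> 0" using c(1) by auto
  have "v \<noteq> 0\<^sub>v n"
  proof
    assume "v = 0\<^sub>v n"
    hence "ip n v (bs!k0) = 0" unfolding ip_def by simp
    thus False using ON_ip[OF on k0(1)] k0(2) unfolding v_def by simp
  qed
  hence "ip n v v \<noteq> 0" using ip_self_zero[OF vc] by auto
  hence Npos: "Re (ip n v v) > 0" using ip_self_ge0[of n v] ip_self_real[of n v]
    by (metis less_eq_real_def of_real_0)
  have N: "Re (ip n v v) = (\<Sum>j\<in>{1..n}. (cmod (ip n v (w j)))^2)"
    using norm_form[OF PAR vc] by simp
  have "Re (ip n (A *\<^sub>v v) v) = (\<Sum>j\<in>{1..n}. lam j * (cmod (ip n v (w j)))^2)"
    using quad_form[OF A sa W EIG PAR vc] by simp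
  also have "\<dots> \<le> (\<Sum>j\<in>{1..n}. lam (Suc r) * (cmod (ip n v (w j)))^2)"
  proof (rule sum_mono)
    fix j assume j: "j \<in> {1..n}"
    show "lam j * (cmod (ip n v (w j)))^2 \<le> lam (Suc r) * (cmod (ip n v (w j)))^2"
    proof (cases "j \<le> r")
      case True
      then show ?thesis using orth[of j] j by simp
    next
      case False
      then show ?thesis using mono j by (intro mult_right_mono) auto
    qed
  qed
  also have "\<dots> = lam (Suc r) * Re (ip n v v)" unfolding N by (simp add: sum_distrib_left)
  finally have "eps * Re (ip n v v) \<le> lam (Suc r) * Re (ip n v v)"
    using code_quad[OF C B A code vC] ip_self_real[of n v] by (metis Re_complex_of_real of_real_mult)
  thus ?thesis using Npos by simp
qed

lemma code_weight:
  assumes C: "csubspace_vec n C" and B: "ONB n C bs" and A: "A \<in> carrier_mat n n"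
    and sa: "mat_adjoint A = A"
    and code: "pm n bs * A * pm n bs = complex_of_real eps \<cdot>\<^sub>m pm n bs"
    and W: "\<forall>j\<in>{1..n}. w j \<in> carrier_vec n"
    and EIG: "\<forall>j\<in>{1..n}. A *\<^sub>v w j = complex_of_real (lam j) \<cdot>\<^sub>v w j"
    and PAR: "\<forall>x\<in>carrier_vec n. \<forall>y\<in>carrier_vec n. ip n y x = (\<Sum>j\<in>{1..n}. ip n y (w j) * ip n (w j) x)"
    and pos: "\<forall>j\<in>{1..n}. lam j \<ge> 0"
    and s: "s \<in> {1..n}"
  shows "lam s * (\<Sum>k<length bs. (cmod (ip n (w s) (bs!k)))^2)^2
          \<le> eps * (\<Sum>k<length bs. (cmod (ip n (w s) (bs!k)))^2)"
proof -
  define om where "om = (\<Sum>k<length bs. (cmod (ip n (w s) (bs!k)))^2)"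
  have Cc: "C \<subseteq> carrier_vec n" using C unfolding csubspace_vec_def by auto
  have ws: "w s \<in> carrier_vec n" using W s by auto
  define x where "x = pm n bs *\<^sub>v w s"
  have xC: "x \<in> C" unfolding x_def by (rule pm_in[OF C B ws])
  have xc: "x \<in> carrier_vec n" unfolding x_def using ws by simp
  have xw: "ip n x (w s) = of_real om" unfolding x_def om_def by (rule pm_quad[OF ws])
  have "ip n x x = ip n (w s) (pm n bs *\<^sub>v x)"
    unfolding x_def by (rule selfadj_ip[OF pm_carrier pm_adjoint ws]) (use xc x_def in simp)
  also have "\<dots> = ip n (w s) x" using pm_fix[OF B xC Cc] by simp
  also have "\<dots> = of_real om" using xw by (subst ip_conj) simp
  finally have xx: "ip n x x = of_real om" .
  have om0: "om \<ge> 0" unfolding om_def by (simp add: sum_nonneg)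
  have "cmod (ip n x (w s)) = om" unfolding xw using om0 by simp
  hence "lam s * om^2 = lam s * (cmod (ip n x (w s)))^2" by simp
  also have "\<dots> \<le> (\<Sum>j\<in>{1..n}. lam j * (cmod (ip n x (w j)))^2)"
    by (rule member_le_sum[of s _ "\<lambda>j. lam j * (cmod (ip n x (w j)))^2"]) (use s pos in auto)
  also have "\<dots> = Re (ip n (A *\<^sub>v x) x)"
    using quad_form[OF A sa W EIG PAR xc] by simp
  also have "\<dots> = eps * om"
    using code_quad[OF C B A code xC] xx by (metis Re_complex_of_real of_real_mult)
  finally show ?thesis unfolding om_def .
qed

lemma sum_proj:
  assumes K: "finite K" and Pc: "\<forall>C\<in>K. Pf C \<in> carrier_mat n n"
    and sumI: "mat n n (\<lambda>(p, q). \<Sum>C\<in>K. Pf C $$ (p, q)) = 1\<^sub>m n"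
    and y: "y \<in> carrier_vec n"
  shows "(\<Sum>C\<in>K. ip n (Pf C *\<^sub>v y) y) = ip n y y"
proof -
  have e: "(\<Sum>C\<in>K. Pf C $$ (p, q)) = (if p = q then 1 else 0)" if "p < n" "q < n" for p q
    using arg_cong[OF sumI, of "\<lambda>M. M $$ (p,q)"] that by simp
  have "(\<Sum>C\<in>K. ip n (Pf C *\<^sub>v y) y) = (\<Sum>C\<in>K. \<Sum>p<n. \<Sum>q<n. Pf C $$ (p,q) * y $ q * cnj (y $ p))"
    unfolding ip_def
  proof (intro sum.cong refl)
    fix C p assume C: "C \<in> K" and p: "p \<in> {..<n}"
    have "(Pf C *\<^sub>v y) $ p = (\<Sum>q<n. Pf C $$ (p,q) * y $ q)" using mv[OF _ y] Pc C p by auto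
    thus "(Pf C *\<^sub>v y) $ p * cnj (y $ p) = (\<Sum>q<n. Pf C $$ (p,q) * y $ q * cnj (y $ p))"
      by (simp add: sum_distrib_right)
  qed
  also have "\<dots> = (\<Sum>p<n. \<Sum>C\<in>K. \<Sum>q<n. Pf C $$ (p,q) * y $ q * cnj (y $ p))"
    by (rule sum.swap)
  also have "\<dots> = (\<Sum>p<n. \<Sum>q<n. \<Sum>C\<in>K. Pf C $$ (p,q) * y $ q * cnj (y $ p))"
    by (intro sum.cong refl sum.swap)
  also have "\<dots> = (\<Sum>p<n. \<Sum>q<n. (\<Sum>C\<in>K. Pf C $$ (p,q)) * (y $ q * cnj (y $ p)))"
    by (simp add: sum_distrib_right mult.assoc)
  also have "\<dots> = (\<Sum>p<n. \<Sum>q<n. if p = q then y $ q * cnj (y $ p) else 0)"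
    using e by (intro sum.cong refl) simp
  also have "\<dots> = ip n y y" unfolding ip_def by simp
  finally show ?thesis .
qed

fun FF :: "nat \<Rightarrow> nat \<Rightarrow> nat" where
  "FF m 0 = 0"
| "FF m (Suc k) = FF m k + FF m k div m + 1"

lemma FF_step_mono: "x \<le> y \<Longrightarrow> x + x div m + 1 \<le> y + y div (m::nat) + 1"
  using div_le_mono by (simp add: add_mono)

lemma FF_mono_Suc: "FF m k \<le> FF m (Suc k)" by simp

lemma comb:
  fixes d :: "'a \<Rightarrow> nat"
  assumes m1: "m \<ge> 1"
  shows "finite K \<Longrightarrow> (\<forall>r. min (sum d K) (m*r) \<le> sum d {C\<in>K. d C \<le> r}) \<Longrightarrow> sum d K \<le> FF m (card K)"
proof (induction "card K" arbitrary: K)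
  case 0
  then show ?case by simp
next
  case (Suc k)
  hence Kne: "K \<noteq> {}" by auto
  have "Max (d ` K) \<in> d ` K" using Suc.prems(1) Kne by (intro Max_in) auto
  then obtain C0 where C0a: "C0 \<in> K" "d C0 = Max (d ` K)" by auto
  have C0: "C0 \<in> K" "\<forall>C\<in>K. d C \<le> d C0" using C0a Suc.prems(1) by auto
  define K' where "K' = K - {C0}"
  have fK': "finite K'" using Suc.prems(1) unfolding K'_def by simp
  have cK': "card K' = k" using Suc.hyps(2) C0 unfolding K'_def by simp
  have sK: "sum d K = sum d K' + d C0" unfolding K'_def using Suc.prems(1) C0(1)
    by (simp add: sum.remove)
  have prop': "\<forall>r. min (sum d K') (m*r) \<le> sum d {C\<in>K'. d C \<le> r}"
  proof
    fix r
    show "min (sum d K') (m*r) \<le> sum d {C\<in>K'. d C \<le> r}"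
    proof (cases "r < d C0")
      case True
      hence "{C\<in>K'. d C \<le> r} = {C\<in>K. d C \<le> r}" unfolding K'_def by auto
      moreover have "min (sum d K') (m*r) \<le> min (sum d K) (m*r)" using sK by simp
      ultimately show ?thesis using Suc.prems(2) by (metis order_trans)
    next
      case False
      hence "{C\<in>K'. d C \<le> r} = K'" unfolding K'_def using C0 by force
      then show ?thesis by simp
    qed
  qed
  have IH: "sum d K' \<le> FF m k" using Suc.hyps(1)[OF cK'[symmetric] fK' prop'] cK' by simp
  show ?case
  proof (cases "d C0 = 0")
    case True
    then show ?thesis using sK IH Suc.hyps(2)[symmetric] by simp
  next
    case False
    have sub: "{C\<in>K. d C \<le> d C0 - 1} \<subseteq> K'" unfolding K'_def using False by auto
    have "min (sum d K) (m * (d C0 - 1)) \<le> sum d {C\<in>K. d C \<le> d C0 - 1}" using Suc.prems(2) by blast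
    also have "\<dots> \<le> sum d K'" by (rule sum_mono2[OF fK' sub]) simp
    finally have mm: "min (sum d K) (m * (d C0 - 1)) \<le> sum d K'" .
    have "m * (d C0 - 1) \<le> sum d K'" using mm sK False by linarith
    hence "(m * (d C0 - 1)) div m \<le> sum d K' div m" by (rule div_le_mono)
    hence "d C0 - 1 \<le> sum d K' div m" using m1 by simp
    hence "sum d K \<le> sum d K' + sum d K' div m + 1" using sK by linarith
    also have "\<dots> \<le> FF m k + FF m k div m + 1" by (rule FF_step_mono[OF IH])
    finally show ?thesis using Suc.hyps(2)[symmetric] by simp
  qed
qed

lemma slog_bound:
  assumes m: "m \<ge> 1"
  shows "N \<le> FF m k \<Longrightarrow> slog N (m+1) \<le> k"
proof (induction k arbitrary: N)
  case 0
  then show ?case by (subst slog.simps) simp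
next
  case (Suc k)
  show ?case
  proof (cases "N = 0")
    case True
    then show ?thesis by (subst slog.simps) simp
  next
    case False
    define M where "M = FF m k"
    have N: "N \<le> M + M div m + 1" using Suc.prems unfolding M_def by simp
    have "N - nat \<lceil>real N / real (m+1)\<rceil> \<le> M"
    proof (cases "N \<le> M")
      case True then show ?thesis by simp
    next
      case False
      define t where "t = N - M"
      have t1: "t - 1 \<le> M div m" using N False unfolding t_def by linarith
      have "(t - 1) * m \<le> M div m * m" using t1 by (rule mult_right_mono) simp
      also have "\<dots> \<le> M" using div_mult_mod_eq[of M m] by linarith
      finally have tm: "(t - 1) * m \<le> M" .
      have tpos: "t \<ge> 1" using False unfolding t_def by simp
      have "real (t - 1) * real m \<le> real M" using tm by (metis of_nat_le_iff of_nat_mult)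
      hence "(real t - 1) * real m \<le> real M" using tpos by (simp add: of_nat_diff)
      hence "(real t - 1) * real (m+1) < real N"
        using False unfolding t_def by (simp add: of_nat_diff algebra_simps)
      hence "real t - 1 < real N / real (m+1)" by (simp add: field_simps)
      hence "int t \<le> \<lceil>real N / real (m+1)\<rceil>" by (simp add: le_ceiling_iff)
      hence "t \<le> nat \<lceil>real N / real (m+1)\<rceil>" by linarith
      thus ?thesis unfolding t_def by linarith
    qed
    hence "slog (N - nat \<lceil>real N / real (m+1)\<rceil>) (m+1) \<le> k" using Suc.IH unfolding M_def by blast
    moreover have "slog N (m+1) = slog (N - nat \<lceil>real N / real (m+1)\<rceil>) (m+1) + 1"
      using False by (subst slog.simps) simp
    ultimately show ?thesis by simp
  qed
qed

theorem proposition2: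
  fixes n m :: nat
    and E :: "complex mat set"
    and A :: "nat \<Rightarrow> complex mat"
    and lam :: "nat \<Rightarrow> nat \<Rightarrow> real"
    and w :: "nat \<Rightarrow> nat \<Rightarrow> complex vec"
    and u :: "nat \<Rightarrow> complex vec"
    and K :: "complex vec set set"
  assumes n2: "n \<ge> 2" and m1: "1 \<le> m" and mn: "m \<le> n - 1"
    and A_carrier: "\<forall>i\<in>{1..m}. A i \<in> carrier_mat n n"
    and A_selfadj: "\<forall>i\<in>{1..m}. mat_adjoint (A i) = A i"
    and E_span: "E = range (lincomb n m A)"
    and E_basis: "\<forall>c. lincomb n m A c = 0\<^sub>m n n \<longrightarrow> (\<forall>i\<le>m. c i = 0)"
    and E_comm: "\<forall>X\<in>E. \<forall>Y\<in>E. X * Y = Y * X"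
    and u_carrier: "\<forall>l\<in>{1..n}. u l \<in> carrier_vec n"
    and u_orthonormal: "\<forall>k\<in>{1..n}. \<forall>l\<in>{1..n}. u k \<bullet>c u l = (if k = l then 1 else 0)"
    and w_perm: "\<forall>i\<in>{1..m}. bij_betw (w i) {1..n} (u ` {1..n})"
    and w_eigen: "\<forall>i\<in>{1..m}. \<forall>j\<in>{1..n}. A i *\<^sub>v w i j = complex_of_real (lam i j) \<cdot>\<^sub>v w i j"
    and tropical: "\<forall>i\<in>{1..m}. \<forall>j. 1 \<le> j \<and> j < n \<longrightarrow>
                     0 < lam i (j + 1) \<and> lam i (j + 1) < lam i j / (real n)^2"
    and cyclical: "\<forall>i. 1 \<le> i \<and> i < m \<longrightarrow>
                     (\<forall>j\<in>{1..n}. w (i + 1) j = w i ((j + shift n m i - 1) mod n + 1))"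
    and enum: "\<forall>l\<in>{1..n}. \<exists>i\<in>{1..m}. u l = w i (nat \<lceil>real l / real m\<rceil>)"
    and K_col: "is_coloring n E K"
  shows "card K \<ge> slog n (m + 1)"
proof -
  have n1: "n \<ge> 1" using n2 by simp
  define us where "us = map (\<lambda>k. u (Suc k)) [0..<n]"
  have us_len: "length us = n" unfolding us_def by simp
  have us_nth: "k < n \<Longrightarrow> us!k = u (Suc k)" for k unfolding us_def by simp
  have uip: "k \<in> {1..n} \<Longrightarrow> l \<in> {1..n} \<Longrightarrow> ip n (u k) (u l) = (if k = l then 1 else 0)" for k l
    using u_orthonormal u_carrier cscalar_ip by metis
  have us_on: "ON n us" unfolding ON_def
    using us_len us_nth u_carrier uip by (auto simp: set_conv_nth)
  have sum_shift: "(\<Sum>k<n. f (Suc k)) = (\<Sum>l\<in>{1..n}. f l)" for f :: "nat \<Rightarrow> complex"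
    by (simp add: sum.atLeast1_atMost_eq)
  have PARu: "\<forall>x\<in>carrier_vec n. \<forall>y\<in>carrier_vec n. ip n y x = (\<Sum>l\<in>{1..n}. ip n y (u l) * ip n (u l) x)"
  proof (intro ballI)
    fix x y :: "complex vec" assume x: "x \<in> carrier_vec n" and y: "y \<in> carrier_vec n"
    have "ip n y x = (\<Sum>k<n. ip n y (us!k) * ip n (us!k) x)" by (rule parseval_list[OF us_on us_len x y])
    also have "\<dots> = (\<Sum>k<n. ip n y (u (Suc k)) * ip n (u (Suc k)) x)" using us_nth by simp
    also have "\<dots> = (\<Sum>l\<in>{1..n}. ip n y (u l) * ip n (u l) x)" by (rule sum_shift)
    finally show "ip n y x = (\<Sum>l\<in>{1..n}. ip n y (u l) * ip n (u l) x)" .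
  qed
  have u_inj: "inj_on u {1..n}"
  proof (rule inj_onI)
    fix k l assume k: "k \<in> {1..n}" and l: "l \<in> {1..n}" and e: "u k = u l"
    have "ip n (u k) (u l) = 1" using uip[OF k k] e by simp
    thus "k = l" using uip[OF k l] by (metis zero_neq_one)
  qed
  have reindex_w: "(\<Sum>j\<in>{1..n}. g (w i j)) = (\<Sum>l\<in>{1..n}. g (u l))" if i: "i \<in> {1..m}" for i and g :: "complex vec \<Rightarrow> complex"
  proof -
    have "(\<Sum>j\<in>{1..n}. g (w i j)) = (\<Sum>v\<in>u ` {1..n}. g v)"
      by (rule sum.reindex_bij_betw) (use w_perm i in auto)
    also have "\<dots> = (\<Sum>l\<in>{1..n}. g (u l))" using sum.reindex[OF u_inj, of g] by simp
    finally show ?thesis .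
  qed
  have PARw: "\<forall>x\<in>carrier_vec n. \<forall>y\<in>carrier_vec n. ip n y x = (\<Sum>j\<in>{1..n}. ip n y (w i j) * ip n (w i j) x)"
    if i: "i \<in> {1..m}" for i
    using PARu reindex_w[OF i, of "\<lambda>v. ip n _ v * ip n v _"] by simp
  have Wc: "\<forall>j\<in>{1..n}. w i j \<in> carrier_vec n" if i: "i \<in> {1..m}" for i
  proof
    fix j assume j: "j \<in> {1..n}"
    have "w i ` {1..n} = u ` {1..n}" using w_perm i unfolding bij_betw_def by auto
    hence "w i j \<in> u ` {1..n}" using j by blast
    thus "w i j \<in> carrier_vec n" using u_carrier by auto
  qed
  have lam_pos: "lam i j > 0" if i: "i \<in> {1..m}" and j: "j \<in> {1..n}" for i j
  proof (cases "j = 1")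
    case True
    have "0 < lam i 2" using tropical i n2 by (metis one_add_one order_refl one_less_numeral_iff semiring_norm(76) less_le_trans)
    moreover have "lam i 2 < lam i 1 / (real n)^2" using tropical i n2
      by (metis one_add_one order_refl one_less_numeral_iff semiring_norm(76) less_le_trans)
    ultimately have "0 < lam i 1 / (real n)^2" by linarith
    thus ?thesis using True n2 by (simp add: zero_less_divide_iff)
  next
    case False
    hence "1 \<le> j - 1 \<and> j - 1 < n" using j by auto
    hence "0 < lam i (j - 1 + 1)" using tropical i by blast
    thus ?thesis using False j by simp
  qed
  have lam_step: "lam i (Suc j) \<le> lam i j / (real n)^2 \<and> lam i (Suc j) \<le> lam i j"
    if i: "i \<in> {1..m}" and j: "1 \<le> j" "j < n" for i j
  proof -
    have lt: "lam i (Suc j) < lam i j / (real n)^2" using tropical i j by simp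
    have "lam i j > 0" using lam_pos[OF i] j by simp
    moreover have "(real n)^2 \<ge> 1" using n1 by simp
    ultimately have "lam i j / (real n)^2 \<le> lam i j" by (simp add: divide_le_eq)
    thus ?thesis using lt by simp
  qed
  have lam_mono: "lam i b \<le> lam i a" if i: "i \<in> {1..m}" and ab: "1 \<le> a" "a \<le> b" "b \<le> n" for i a b
    using ab
  proof (induction b)
    case 0 then show ?case by simp
  next
    case (Suc b)
    show ?case
    proof (cases "a = Suc b")
      case True then show ?thesis by simp
    next
      case False
      hence "a \<le> b" using Suc by simp
      hence "lam i b \<le> lam i a" using Suc by simp
      moreover have "lam i (Suc b) \<le> lam i b" using lam_step[OF i] Suc.prems \<open>a \<le> b\<close> by simp
      ultimately show ?thesis by simp
    qed
  qed
  have lam_ratio: "lam i (Suc r) < lam i s / (real n)^2"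
    if i: "i \<in> {1..m}" and sr: "1 \<le> s" "s \<le> r" "r < n" for i s r
  proof -
    have "lam i (Suc r) \<le> lam i (Suc s)" using lam_mono[OF i, of "Suc s" "Suc r"] sr by simp
    moreover have "lam i (Suc s) < lam i s / (real n)^2" using tropical i sr by simp
    ultimately show ?thesis by simp
  qed
  have K_fin: "finite K" and codes: "\<forall>C\<in>K. is_code n E C"
    and sumI: "mat n n (\<lambda>(p, q). \<Sum>C\<in>K. orth_proj n C $$ (p, q)) = 1\<^sub>m n"
    using K_col unfolding is_coloring_def by auto
  have Ai_E: "A i \<in> E" if i: "i \<in> {1..m}" for i
  proof -
    have "lincomb n m A (\<lambda>j. if j = i then 1 else 0) = A i"
    proof (rule eq_matI)
      fix p q assume p: "p < dim_row (A i)" and q: "q < dim_col (A i)"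
      hence p': "p < n" and q': "q < n" using A_carrier i by auto
      have "(\<Sum>i'=1..m. complex_of_real (if i' = i then 1 else 0) * A i' $$ (p, q))
            = (\<Sum>i'=1..m. if i' = i then A i' $$ (p, q) else 0)"
        by (intro sum.cong refl) auto
      also have "\<dots> = A i $$ (p,q)" using i by simp
      finally show "lincomb n m A (\<lambda>j. if j = i then 1 else 0) $$ (p, q) = A i $$ (p, q)"
        unfolding lincomb_def using p' q' i by simp
    qed (use A_carrier i in \<open>auto simp: lincomb_def\<close>)
    thus ?thesis unfolding E_span by (metis rangeI)
  qed
  define B where "B = (\<lambda>C. SOME bs. ONB n C bs)"
  have Csub: "csubspace_vec n C" if "C \<in> K" for C using codes that unfolding is_code_def by auto
  have BC: "ONB n C (B C)" if C: "C \<in> K" for C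
    unfolding B_def by (rule someI_ex) (use ONB_exists[OF Csub[OF C]] in \<open>auto simp: ONB_def\<close>)
  have OP: "orth_proj n C = pm n (B C)" if C: "C \<in> K" for C by (rule orth_proj_pm[OF Csub[OF C] BC[OF C]])
  define d where "d = (\<lambda>C. length (B C))"
  define om where "om = (\<lambda>C y. \<Sum>k<d C. (cmod (ip n y (B C!k)))^2)"
  have om_nn: "om C y \<ge> 0" for C y unfolding om_def by (simp add: sum_nonneg)
  have d_le: "d C \<le> n" if C: "C \<in> K" for C
    using ON_length BC[OF C] unfolding d_def ONB_def by auto
  have F1: "(\<Sum>C\<in>K. om C (u l)) = 1" if l: "l \<in> {1..n}" for l
  proof -
    have ul: "u l \<in> carrier_vec n" using u_carrier l by auto
    have "(\<Sum>C\<in>K. ip n (orth_proj n C *\<^sub>v u l) (u l)) = ip n (u l) (u l)"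
      by (rule sum_proj[OF K_fin _ sumI ul]) (use OP in simp)
    also have "\<dots> = 1" using uip[OF l l] by simp
    finally have "(\<Sum>C\<in>K. ip n (orth_proj n C *\<^sub>v u l) (u l)) = 1" .
    moreover have "ip n (orth_proj n C *\<^sub>v u l) (u l) = of_real (om C (u l))" if C: "C \<in> K" for C
      unfolding OP[OF C] om_def d_def by (rule pm_quad[OF ul])
    ultimately have "of_real (\<Sum>C\<in>K. om C (u l)) = (1::complex)" by simp
    thus ?thesis by (metis of_real_eq_1_iff)
  qed
  have F2: "(\<Sum>l\<in>{1..n}. om C (u l)) = real (d C)" if C: "C \<in> K" for C
  proof -
    have on: "ON n (B C)" using BC[OF C] unfolding ONB_def by auto
    have "(\<Sum>l\<in>{1..n}. om C (u l)) = (\<Sum>k<d C. \<Sum>l\<in>{1..n}. (cmod (ip n (u l) (B C!k)))^2)"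
      unfolding om_def by (rule sum.swap)
    also have "\<dots> = (\<Sum>k<d C. 1)"
    proof (intro sum.cong refl)
      fix k assume k: "k \<in> {..<d C}"
      have bk: "B C!k \<in> carrier_vec n" using ON_carrier[OF on] k unfolding d_def by auto
      have "of_real (\<Sum>l\<in>{1..n}. (cmod (ip n (B C!k) (u l)))^2) = ip n (B C!k) (B C!k)"
        using norm_form[OF PARu bk] by simp
      also have "\<dots> = 1" using on k unfolding ON_def d_def by auto
      finally have "(\<Sum>l\<in>{1..n}. (cmod (ip n (B C!k) (u l)))^2) = 1" by (metis of_real_eq_1_iff)
      moreover have "cmod (ip n (u l) (B C!k)) = cmod (ip n (B C!k) (u l))" for l
        by (subst ip_conj) simp
      ultimately show "(\<Sum>l\<in>{1..n}. (cmod (ip n (u l) (B C!k)))^2) = 1" by simp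
    qed
    finally show ?thesis by simp
  qed
  have F3: "om C (w i s) < 1 / (real n)^2"
    if C: "C \<in> K" and big: "r < d C" and i: "i \<in> {1..m}" and s: "s \<in> {1..r}" for C r i s
  proof -
    obtain eps where eps: "\<forall>X\<in>E. orth_proj n C * X * orth_proj n C = complex_of_real (eps X) \<cdot>\<^sub>m orth_proj n C"
      using codes C unfolding is_code_def by auto
    have code: "pm n (B C) * A i * pm n (B C) = complex_of_real (eps (A i)) \<cdot>\<^sub>m pm n (B C)"
      using eps Ai_E[OF i] OP[OF C] by auto
    have rn: "r < n" using big d_le[OF C] by simp
    have Ac: "A i \<in> carrier_mat n n" and sa: "mat_adjoint (A i) = A i" using A_carrier A_selfadj i by auto
    have EIG: "\<forall>j\<in>{1..n}. A i *\<^sub>v w i j = complex_of_real (lam i j) \<cdot>\<^sub>v w i j" using w_eigen i by auto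
    have mono: "\<forall>j. r < j \<and> j \<le> n \<longrightarrow> lam i j \<le> lam i (Suc r)"
      using lam_mono[OF i, of "Suc r"] by auto
    have eb: "eps (A i) \<le> lam i (Suc r)"
      by (rule code_eps_bound[OF Csub[OF C] BC[OF C] Ac sa code Wc[OF i] EIG PARw[OF i] mono])
        (use big in \<open>simp add: d_def\<close>)
    have sn: "s \<in> {1..n}" using s rn by auto
    have pos: "\<forall>j\<in>{1..n}. lam i j \<ge> 0" using lam_pos[OF i] by (simp add: less_imp_le)
    have cw: "lam i s * (om C (w i s))^2 \<le> eps (A i) * om C (w i s)"
      using code_weight[OF Csub[OF C] BC[OF C] Ac sa code Wc[OF i] EIG PARw[OF i] pos sn]
      unfolding om_def d_def .
    have ratio: "lam i (Suc r) < lam i s / (real n)^2" using lam_ratio[OF i] s rn by auto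
    have ls: "lam i s > 0" using lam_pos[OF i sn] .
    show ?thesis
    proof (cases "om C (w i s) = 0")
      case True then show ?thesis using n1 by simp
    next
      case False
      hence o: "om C (w i s) > 0" using om_nn[of C "w i s"] by simp
      have "lam i s * om C (w i s) \<le> eps (A i)"
        using cw o by (simp add: power2_eq_square mult.assoc[symmetric])
      hence "lam i s * om C (w i s) < lam i s / (real n)^2" using eb ratio by simp
      hence "lam i s * om C (w i s) < lam i s * (1 / (real n)^2)" by simp
      thus ?thesis using ls by (simp only: mult_less_cancel_left_pos)
    qed
  qed
  have Fd: "real (sum d K) = real n"
  proof -
    have "real (sum d K) = (\<Sum>C\<in>K. \<Sum>l\<in>{1..n}. om C (u l))" using F2 by simp
    also have "\<dots> = (\<Sum>l\<in>{1..n}. \<Sum>C\<in>K. om C (u l))" by (rule sum.swap)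
    also have "\<dots> = (\<Sum>l\<in>{1..n}. 1)" using F1 by simp
    finally show ?thesis by simp
  qed
  hence sumd: "sum d K = n" by (metis of_nat_eq_iff)
  have propK: "\<forall>r. min (sum d K) (m*r) \<le> sum d {C\<in>K. d C \<le> r}"
  proof
    fix r
    define L where "L = min n (m*r)"
    define S where "S = {1..L}"
    define Ks where "Ks = {C\<in>K. d C \<le> r}"
    define Kb where "Kb = {C\<in>K. \<not> d C \<le> r}"
    have Sn: "S \<subseteq> {1..n}" unfolding S_def L_def by auto
    have fKs: "finite Ks" and fKb: "finite Kb" using K_fin unfolding Ks_def Kb_def by auto
    have a: "(\<Sum>C\<in>K. \<Sum>l\<in>S. om C (u l)) = real L"
    proof -
      have "(\<Sum>C\<in>K. \<Sum>l\<in>S. om C (u l)) = (\<Sum>l\<in>S. \<Sum>C\<in>K. om C (u l))" by (rule sum.swap)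
      also have "\<dots> = (\<Sum>l\<in>S. 1)" using F1 Sn by (intro sum.cong refl) auto
      finally show ?thesis unfolding S_def by simp
    qed
    have b: "(\<Sum>C\<in>Ks. \<Sum>l\<in>S. om C (u l)) \<le> (\<Sum>C\<in>Ks. real (d C))"
    proof (rule sum_mono)
      fix C assume C: "C \<in> Ks"
      have "(\<Sum>l\<in>S. om C (u l)) \<le> (\<Sum>l\<in>{1..n}. om C (u l))"
        by (rule sum_mono2) (use Sn om_nn in auto)
      also have "\<dots> = real (d C)" using F2 C unfolding Ks_def by auto
      finally show "(\<Sum>l\<in>S. om C (u l)) \<le> real (d C)" .
    qed
    have bigw: "om C (u l) < 1 / (real n)^2" if C: "C \<in> Kb" and l: "l \<in> S" for C l
    proof -
      have l1: "1 \<le> l" "l \<le> n" "l \<le> m*r" using l unfolding S_def L_def by auto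
      have "l \<in> {1..n}" using l1 by simp
      hence "\<exists>i\<in>{1..m}. u l = w i (nat \<lceil>real l / real m\<rceil>)" using enum by blast
      then obtain i where i: "i \<in> {1..m}" and ui: "u l = w i (nat \<lceil>real l / real m\<rceil>)" by blast
      have mpos: "real m > 0" using m1 by simp
      have "real l / real m > 0" using l1 mpos by simp
      hence j1: "1 \<le> \<lceil>real l / real m\<rceil>" by (simp add: le_ceiling_iff)
      have "real l \<le> real m * real r" using l1 by (metis of_nat_le_iff of_nat_mult)
      hence "real l / real m \<le> real r" using mpos by (simp add: divide_le_eq mult.commute)
      hence j2: "\<lceil>real l / real m\<rceil> \<le> int r" by (simp add: ceiling_le_iff)
      have natc: "\<And>c::int. 1 \<le> c \<Longrightarrow> c \<le> int r \<Longrightarrow> nat c \<in> {1..r}" by auto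
      have js: "nat \<lceil>real l / real m\<rceil> \<in> {1..r}" by (rule natc[OF j1 j2])
      have "r < d C" "C \<in> K" using C unfolding Kb_def by auto
      from F3[OF this(2) this(1) i js] show ?thesis unfolding ui .
    qed
    have c: "(\<Sum>C\<in>Kb. \<Sum>l\<in>S. om C (u l)) < 1"
    proof (cases "Kb = {} \<or> S = {}")
      case True then show ?thesis by auto
    next
      case False
      have cardKb: "card Kb \<le> n"
      proof -
        have "card Kb = (\<Sum>C\<in>Kb. 1)" by simp
        also have "\<dots> \<le> (\<Sum>C\<in>Kb. d C)" by (rule sum_mono) (auto simp: Kb_def)
        also have "\<dots> \<le> sum d K" by (rule sum_mono2[OF K_fin]) (auto simp: Kb_def)
        finally show ?thesis using sumd by simp
      qed
      have "(\<Sum>C\<in>Kb. \<Sum>l\<in>S. om C (u l)) < (\<Sum>C\<in>Kb. \<Sum>l\<in>S. 1 / (real n)^2)"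
      proof (rule sum_strict_mono[OF fKb])
        show "Kb \<noteq> {}" using False by simp
        fix C assume C: "C \<in> Kb"
        show "(\<Sum>l\<in>S. om C (u l)) < (\<Sum>l\<in>S. 1 / (real n)^2)"
          by (rule sum_strict_mono) (use False bigw C in \<open>auto simp: S_def\<close>)
      qed
      also have "\<dots> = real (card Kb) * real L / (real n)^2" unfolding S_def by simp
      also have "\<dots> \<le> real n * real n / (real n)^2"
      proof -
        have "real (card Kb) * real L \<le> real n * real n"
          using cardKb L_def by (intro mult_mono) auto
        thus ?thesis by (simp add: divide_right_mono)
      qed
      also have "\<dots> = 1" using n1 by (simp add: power2_eq_square)
      finally show ?thesis .
    qed
    have K_split: "K = Ks \<union> Kb" "Ks \<inter> Kb = {}" unfolding Ks_def Kb_def by auto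
    have "(\<Sum>C\<in>K. \<Sum>l\<in>S. om C (u l)) = (\<Sum>C\<in>Ks. \<Sum>l\<in>S. om C (u l)) + (\<Sum>C\<in>Kb. \<Sum>l\<in>S. om C (u l))"
      unfolding K_split(1) by (rule sum.union_disjoint[OF fKs fKb K_split(2)])
    hence "real L < (\<Sum>C\<in>Ks. real (d C)) + 1" using a b c by linarith
    hence "real L < real (sum d Ks) + 1" by simp
    hence "L \<le> sum d Ks" by linarith
    thus "min (sum d K) (m*r) \<le> sum d {C\<in>K. d C \<le> r}" unfolding L_def Ks_def sumd .
  qed
  have "sum d K \<le> FF m (card K)" by (rule comb[OF m1 K_fin propK])
  thus ?thesis using slog_bound[OF m1] sumd by simp
qed

end
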